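(* Let $G=(V,E)$ be a finite simple undirected graph, let $0<p\le 1$, let $T\subseteq V$ be a nonempty set maximizing $f_p(S)$ over all $S\subseteq V$, and let $v\in T$ be a vertex with $d_v(T)=\min_{u\in T}d_u(T)$. Then $\Delta_v(T)\le 2\,d_v(T)^p$.
   Context: For $v\in V$, $N(v)=\{u\in V:(u,v)\in E\}$ (so $v\notin N(v)$). For $S\subseteq V$ and $v\in V$, $d_v(S)=|N(v)\cap S|$. For $p>0$ and nonempty $S\subseteq V$, $f_p(S)=\frac{1}{|S|}\sum_{v\in S}d_v(S)^p$ (with the convention $0^p=0$), and $f_p(\emptyset)=0$. For $S\subseteq V$ and $v\in S$, $\Delta_v(S)=d_v(S)^p+\sum_{u\in N(v)\cap S}\big(d_u(S)^p-(d_u(S)-1)^p\big)$. *)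

theory Defs
  imports Complex_Main
begin

definition simple_graph :: "'a set \<Rightarrow> ('a \<times> 'a) set \<Rightarrow> bool" where
  "simple_graph V E \<longleftrightarrow> finite V \<and> E \<subseteq> V \<times> V \<and> (\<forall>u v. (u, v) \<in> E \<longrightarrow> (v, u) \<in> E)
     \<and> (\<forall>v. (v, v) \<notin> E)"

definition nbhd :: "'a set \<Rightarrow> ('a \<times> 'a) set \<Rightarrow> 'a \<Rightarrow> 'a set" where
  "nbhd V E v = {u \<in> V. (u, v) \<in> E}"

definition deg_in :: "'a set \<Rightarrow> ('a \<times> 'a) set \<Rightarrow> 'a set \<Rightarrow> 'a \<Rightarrow> nat" where
  "deg_in V E S v = card (nbhd V E v \<inter> S)"

text \<open>f_p(S); powr satisfies 0 powr p = 0, matching the convention 0^p = 0.\<close>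
definition fp :: "'a set \<Rightarrow> ('a \<times> 'a) set \<Rightarrow> real \<Rightarrow> 'a set \<Rightarrow> real" where
  "fp V E p S = (if S = {} then 0
     else (\<Sum>v\<in>S. real (deg_in V E S v) powr p) / real (card S))"

definition Delta :: "'a set \<Rightarrow> ('a \<times> 'a) set \<Rightarrow> real \<Rightarrow> 'a set \<Rightarrow> 'a \<Rightarrow> real" where
  "Delta V E p S v = real (deg_in V E S v) powr p
     + (\<Sum>u\<in>nbhd V E v \<inter> S. real (deg_in V E S u) powr p - (real (deg_in V E S u) - 1) powr p)"

end

theory Submission
  imports Defs
begin

lemma key: fixes x d p :: real
  assumes "1 \<le> d" "d \<le> x" "0 < p" "p \<le> 1"
  shows "x powr p - (x-1) powr p \<le> d powr (p-1)"
proof -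
  have x0: "x > 0" using assms by simp
  have a: "((x-1)/x) powr p \<ge> ((x-1)/x) powr 1"
    by (rule powr_mono') (use assms x0 in auto)
  have b: "((x-1)/x) powr p = (x-1) powr p / x powr p"
    by (rule powr_divide)
  have "(x-1) powr p \<ge> x powr p * ((x-1)/x)"
    using a b x0 assms by (simp add: field_simps)
  also have "x powr p * ((x-1)/x) = x powr p - x powr (p-1)"
    using x0 by (simp add: powr_diff field_simps)
  finally have c: "x powr p - (x-1) powr p \<le> x powr (p-1)" by simp
  have "x powr (p-1) \<le> d powr (p-1)"
    by (rule powr_mono2') (use assms in auto)
  with c show ?thesis by simp
qed

theorem lemma3:
  fixes V :: "'a set" and E :: "('a \<times> 'a) set" and p :: real and T :: "'a set" and v :: 'a
  assumes "simple_graph V E"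
    and "0 < p" and "p \<le> 1"
    and "T \<subseteq> V" and "T \<noteq> {}"
    and "\<forall>S. S \<subseteq> V \<longrightarrow> fp V E p S \<le> fp V E p T"
    and "v \<in> T"
    and "\<forall>u\<in>T. deg_in V E T v \<le> deg_in V E T u"
  shows "Delta V E p T v \<le> 2 * real (deg_in V E T v) powr p"
proof -
  define d where "d = deg_in V E T v"
  define N where "N = nbhd V E v \<inter> T"
  have finV: "finite V" using assms(1) by (simp add: simple_graph_def)
  have finN: "finite N" unfolding N_def nbhd_def using finV by auto
  have cardN: "card N = d" unfolding N_def d_def deg_in_def by simp
  have sumle: "(\<Sum>u\<in>N. real (deg_in V E T u) powr p - (real (deg_in V E T u) - 1) powr p)
      \<le> real d powr p"
  proof (cases "N = {}")
    case True then show ?thesis by simp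
  next
    case False
    then have d1: "1 \<le> real d" using cardN finN card_gt_0_iff[of N] by simp
    have "(\<Sum>u\<in>N. real (deg_in V E T u) powr p - (real (deg_in V E T u) - 1) powr p)
        \<le> (\<Sum>u\<in>N. real d powr (p-1))"
    proof (rule sum_mono)
      fix u assume "u \<in> N"
      then have "d \<le> deg_in V E T u" using assms(8) unfolding N_def d_def by auto
      then show "real (deg_in V E T u) powr p - (real (deg_in V E T u) - 1) powr p \<le> real d powr (p-1)"
        using key[OF d1 _ assms(2,3)] by simp
    qed
    also have "\<dots> = real d * real d powr (p-1)" using cardN by simp
    also have "\<dots> = real d powr p" using d1 by (simp add: powr_diff field_simps)
    finally show ?thesis .
  qed
  show ?thesis unfolding Delta_def using sumle by (simp add: d_def N_def)
qed

end
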